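(* Let $q$ be a prime power and let $R$ be a finite ring containing the field $\mathbb{F}_q$ as a subring. Let $d=\dim_{\mathbb{F}_q}R$ (so $\#R=q^d$), let $r^*$ be the number of units of $R$, and let $v=\#\mathbb{P}(R)$ be the number of points of the chain geometry $\Sigma(\mathbb{F}_q,R)$. For $i=0,1,2,3$ let $\lambda_i$ denote the number of chains containing $i$ given mutually distant points (this number does not depend on the choice of the points). Then \[ \lambda_0=\frac{v\,q^{d-1}r^*}{q^2-1}\,\lambda_3,\qquad \lambda_1=\frac{q^{d-1}r^*}{q-1}\,\lambda_3,\qquad \lambda_2=\frac{r^*}{q-1}\,\lambda_3 . \]
   Context: All rings are associative with unit element $1\neq 0$, and subrings share the unit. $R^2$ is regarded as a left $R$-module. The projective line $\mathbb{P}(R)$ is the set of all submodules of $R^2$ of the form $R(a,b)$ where $(a\ b)$ is the first row of some invertible $2\times 2$ matrix over $R$. For a field $K\subseteq R$ (as a subring), $\mathbb{P}(K)$ is embedded in $\mathbb{P}(R)$ via $K(a,b)\mapsto R(a,b)$. The chain geometry $\Sigma(K,R)$ has point set $\mathbb{P}(R)$ and its blocks, called chains, are the sets $\mathbb{P}(K)^g$ with $g\in \mathrm{GL}_2(R)$ (acting on $R^2$ from the right). Two points $R(a,b)$, $R(c,d)$ are distant if $\begin{pmatrix}a&b\\c&d\end{pmatrix}\in\mathrm{GL}_2(R)$. In particular $\lambda_0$ is the total number of chains and $\lambda_1$ the number of chains through a given point. *)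

theory Defs
  imports Complex_Main
begin

text \<open>2x2 matrices over a ring, written as quadruples (a, b, c, d) for
  the matrix with rows (a b) and (c d).\<close>
type_synonym 'a mat2 = "'a \<times> 'a \<times> 'a \<times> 'a"

definition mat2_mult :: "'a::ring_1 mat2 \<Rightarrow> 'a mat2 \<Rightarrow> 'a mat2" where
  "mat2_mult M N = (case M of (a, b, c, d) \<Rightarrow> case N of (e, f, g, h) \<Rightarrow>
     (a*e + b*g, a*f + b*h, c*e + d*g, c*f + d*h))"

definition mat2_one :: "'a::ring_1 mat2" where
  "mat2_one = (1, 0, 0, 1)"

definition mat2_entries :: "'a mat2 \<Rightarrow> 'a set" where
  "mat2_entries M = (case M of (a, b, c, d) \<Rightarrow> {a, b, c, d})"

definition GL2_in :: "'a::ring_1 set \<Rightarrow> 'a mat2 set" where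
  "GL2_in S = {M. mat2_entries M \<subseteq> S \<and>
     (\<exists>N. mat2_entries N \<subseteq> S \<and> mat2_mult M N = mat2_one \<and> mat2_mult N M = mat2_one)}"

abbreviation GL2 :: "'a::ring_1 mat2 set" where
  "GL2 \<equiv> GL2_in UNIV"

definition is_subfield :: "'a::ring_1 set \<Rightarrow> bool" where
  "is_subfield K \<longleftrightarrow> 0 \<in> K \<and> 1 \<in> K \<and>
     (\<forall>x\<in>K. \<forall>y\<in>K. x + y \<in> K \<and> x - y \<in> K \<and> x * y \<in> K \<and> x * y = y * x) \<and>
     (\<forall>x\<in>K. x \<noteq> 0 \<longrightarrow> (\<exists>y\<in>K. x * y = 1))"

definition ring_units :: "'a::ring_1 set" where
  "ring_units = {u. \<exists>v. u * v = 1 \<and> v * u = 1}"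

definition cyc :: "'a::ring_1 \<Rightarrow> 'a \<Rightarrow> ('a \<times> 'a) set" where
  "cyc a b = {(r * a, r * b) | r. True}"

definition projline :: "('a::ring_1 \<times> 'a) set set" where
  "projline = {cyc a b | a b. \<exists>c d. (a, b, c, d) \<in> GL2}"

text \<open>Image of P(K) in P(R): K(a,b) \<mapsto> R(a,b), (a b) first row of a matrix in GL_2(K).\<close>
definition projline_sub :: "'a::ring_1 set \<Rightarrow> ('a \<times> 'a) set set" where
  "projline_sub K = {cyc a b | a b. \<exists>c d. (a, b, c, d) \<in> GL2_in K}"

definition vec_act :: "'a::ring_1 \<times> 'a \<Rightarrow> 'a mat2 \<Rightarrow> 'a \<times> 'a" where
  "vec_act v M = (case v of (x, y) \<Rightarrow> case M of (a, b, c, d) \<Rightarrow> (x*a + y*c, x*b + y*d))"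

definition pt_act :: "('a::ring_1 \<times> 'a) set \<Rightarrow> 'a mat2 \<Rightarrow> ('a \<times> 'a) set" where
  "pt_act p M = (\<lambda>v. vec_act v M) ` p"

definition chains :: "'a::ring_1 set \<Rightarrow> ('a \<times> 'a) set set set" where
  "chains K = {(\<lambda>p. pt_act p g) ` projline_sub K | g. g \<in> GL2}"

definition distant :: "('a::ring_1 \<times> 'a) set \<Rightarrow> ('a \<times> 'a) set \<Rightarrow> bool" where
  "distant p p' \<longleftrightarrow> (\<exists>a b c d. p = cyc a b \<and> p' = cyc c d \<and> (a, b, c, d) \<in> GL2)"

definition chains_through :: "'a::ring_1 set \<Rightarrow> ('a \<times> 'a) set set \<Rightarrow> nat" where
  "chains_through K S = card {C \<in> chains K. S \<subseteq> C}"

end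

theory Submission
  imports Defs
begin


lemma mat2_assoc: "mat2_mult (mat2_mult M N) P = mat2_mult M (mat2_mult (N::'a::ring_1 mat2) P)"
  by (simp add: mat2_mult_def algebra_simps split: prod.split)
lemma mat2_one_left[simp]: "mat2_mult mat2_one M = (M::'a::ring_1 mat2)"
  by (simp add: mat2_mult_def mat2_one_def split: prod.split)
lemma mat2_one_right[simp]: "mat2_mult M mat2_one = (M::'a::ring_1 mat2)"
  by (simp add: mat2_mult_def mat2_one_def split: prod.split)
lemma vec_act_mult: "vec_act (vec_act v M) N = vec_act v (mat2_mult (M::'a::ring_1 mat2) N)"
  by (simp add: mat2_mult_def vec_act_def algebra_simps split: prod.split)
lemma vec_act_one: "vec_act v (mat2_one::'a::ring_1 mat2) = v"
  by (simp add: mat2_one_def vec_act_def split: prod.split)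

lemma cyc_eq: "cyc a b = range (\<lambda>r. (r*a, r*b))"
  by (auto simp: cyc_def)

lemma pt_act_cyc: "pt_act (cyc x y) (a,b,c,d) = cyc (x*a+y*c) (x*b+(y::'a::ring_1)*d)"
  unfolding cyc_eq pt_act_def image_image by (simp add: vec_act_def algebra_simps)

lemma mem_cyc: "(u,v) \<in> cyc a b \<longleftrightarrow> (\<exists>r. u = r*a \<and> v = r*b)"
  by (auto simp: cyc_def)

lemma self_cyc: "((a::'a::ring_1),b) \<in> cyc a b"
  unfolding mem_cyc by (rule exI[of _ 1]) simp

lemma cyc_unit: assumes "v*u = 1" shows "cyc (u*x) (u*y) = cyc x (y::'a::ring_1)"
proof (intro set_eqI iffI)
  fix w assume "w \<in> cyc (u*x) (u*y)"
  then obtain r where "w = (r*(u*x), r*(u*y))" by (auto simp: cyc_def)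
  then show "w \<in> cyc x y" unfolding cyc_def by (auto intro!: exI[of _ "r*u"] simp: mult.assoc)
next
  fix w assume "w \<in> cyc x y"
  then obtain r where w: "w = (r*x, r*y)" by (auto simp: cyc_def)
  have "r*x = (r*v)*(u*x)" "r*y = (r*v)*(u*y)" using assms by (simp_all add: mult.assoc[symmetric] mult.assoc[of r v u])
  then show "w \<in> cyc (u*x) (u*y)" unfolding cyc_def w by blast
qed

lemma GL2I: "mat2_mult M N = mat2_one \<Longrightarrow> mat2_mult N M = mat2_one \<Longrightarrow> (M::'a::ring_1 mat2) \<in> GL2"
  unfolding GL2_in_def using subset_UNIV by blast

lemma GL2E: "(M::'a::ring_1 mat2) \<in> GL2 \<Longrightarrow> \<exists>N. N\<in>GL2 \<and> mat2_mult M N = mat2_one \<and> mat2_mult N M = mat2_one"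
proof -
  assume "M \<in> GL2"
  then obtain N where "mat2_mult M N = mat2_one" "mat2_mult N M = mat2_one" unfolding GL2_in_def by blast
  then show ?thesis by (blast intro: GL2I)
qed

lemma GL2_mult: assumes "(M::'a::ring_1 mat2) \<in> GL2" "N \<in> GL2" shows "mat2_mult M N \<in> GL2"
proof -
  obtain M' where M': "mat2_mult M M' = mat2_one" "mat2_mult M' M = mat2_one" using GL2E[OF assms(1)] by blast
  obtain N' where N': "mat2_mult N N' = mat2_one" "mat2_mult N' N = mat2_one" using GL2E[OF assms(2)] by blast
  show ?thesis
  proof (rule GL2I[of _ "mat2_mult N' M'"])
    show "mat2_mult (mat2_mult M N) (mat2_mult N' M') = mat2_one"
      by (simp add: mat2_assoc M' N' flip: mat2_assoc[of N N' M'])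
    show "mat2_mult (mat2_mult N' M') (mat2_mult M N) = mat2_one"
      by (simp add: mat2_assoc M' N' flip: mat2_assoc[of M' M N])
  qed
qed

lemma GL2_quad: "(a,b,c,d) \<in> GL2 \<longleftrightarrow> (\<exists>e f g h. mat2_mult (a,b,c,d) (e,f,g,h) = mat2_one \<and> mat2_mult (e,f,g,h) ((a::'a::ring_1),b,c,d) = mat2_one)"
  by (auto simp: GL2_in_def)

lemma GL2_swap: assumes "(a,b,c,d) \<in> GL2" shows "(c,d,(a::'a::ring_1),b) \<in> GL2"
proof -
  obtain e f g h where "mat2_mult (a,b,c,d) (e,f,g,h) = mat2_one" "mat2_mult (e,f,g,h) (a,b,c,d) = mat2_one"
    using assms unfolding GL2_quad by blast
  then show ?thesis unfolding GL2_quad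
    by (intro exI[of _ f] exI[of _ e] exI[of _ h] exI[of _ g]) (auto simp: mat2_mult_def mat2_one_def add.commute)
qed

lemma pt_act_comp: "pt_act (pt_act p M) N = pt_act p (mat2_mult (M::'a::ring_1 mat2) N)"
  unfolding pt_act_def image_image vec_act_mult ..

lemma pt_act_one[simp]: "pt_act p (mat2_one::'a::ring_1 mat2) = p"
  unfolding pt_act_def vec_act_one by simp

lemma pt_act_inv: assumes "(M::'a::ring_1 mat2) \<in> GL2"
  shows "\<exists>N\<in>GL2. (\<forall>p. pt_act (pt_act p M) N = p) \<and> (\<forall>p. pt_act (pt_act p N) M = p)"
proof -
  obtain N where "N\<in>GL2" "mat2_mult M N = mat2_one" "mat2_mult N M = mat2_one" using GL2E[OF assms] by blast
  then show ?thesis by (intro bexI[of _ N]) (simp_all add: pt_act_comp)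
qed

lemma projline_iff: "p \<in> projline \<longleftrightarrow> (\<exists>a b c d. p = cyc a b \<and> ((a::'a::ring_1),b,c,d) \<in> GL2)"
  by (auto simp: projline_def)

lemma pt_act_projline: assumes "p \<in> projline" "(M::'a::ring_1 mat2) \<in> GL2" shows "pt_act p M \<in> projline"
proof -
  obtain a b c d where p: "p = cyc a b" "(a,b,c,d) \<in> GL2" using assms(1) unfolding projline_iff by blast
  obtain e f g h where M: "M = (e,f,g,h)" by (cases M)
  have "mat2_mult (a,b,c,d) M \<in> GL2" using GL2_mult[OF p(2) assms(2)] .
  then show ?thesis unfolding projline_iff p M pt_act_cyc by (auto simp: mat2_mult_def)
qed

lemma distant_act: assumes "distant p p'" "(M::'a::ring_1 mat2) \<in> GL2" shows "distant (pt_act p M) (pt_act p' M)"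
proof -
  obtain a b c d where p: "p = cyc a b" "p' = cyc c d" "(a,b,c,d) \<in> GL2" using assms(1) unfolding distant_def by blast
  obtain e f g h where M: "M = (e,f,g,h)" by (cases M)
  have "mat2_mult (a,b,c,d) M \<in> GL2" using GL2_mult[OF p(3) assms(2)] .
  then show ?thesis unfolding distant_def p M pt_act_cyc by (auto simp: mat2_mult_def)
qed

lemma distant_sym: "distant p p' \<Longrightarrow> distant p' (p::('a::ring_1\<times>'a) set)"
  unfolding distant_def using GL2_swap by blast

lemma distant_projline: "distant p p' \<Longrightarrow> p \<in> (projline::('a::ring_1\<times>'a) set set)"
  unfolding distant_def projline_def by blast

lemma distant_irrefl: "\<not> distant p (p::('a::ring_1\<times>'a) set)"
proof
  assume "distant p p"
  then obtain a b c d where p: "p = cyc a b" "p = cyc c d" "(a,b,c,d) \<in> GL2" unfolding distant_def by blast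
  obtain e f g h where E: "mat2_mult (a,b,c,d) (e,f,g,h) = mat2_one" using p(3) unfolding GL2_quad by blast
  have "(c,d) \<in> cyc a b" using p self_cyc by metis
  then obtain r where r: "c = r*a" "d = r*b" unfolding mem_cyc by blast
  from E have e1: "a*e+b*g = 1" "c*e+d*g = 0" "c*f+d*h = 1"
    by (auto simp: mat2_mult_def mat2_one_def)
  have "r = r*(a*e+b*g)" using e1 by simp
  also have "\<dots> = c*e+d*g" using r by (simp add: algebra_simps)
  finally have "r = 0" using e1 by simp
  then show False using e1 r by simp
qed

abbreviation "pI \<equiv> cyc (1::'a::ring_1) 0"
abbreviation "pZ \<equiv> cyc (0::'a::ring_1) 1"
abbreviation "pO \<equiv> cyc (1::'a::ring_1) 1"

lemma dist_inf: assumes "distant (cyc 1 0) x" shows "\<exists>t. x = cyc t (1::'a::ring_1)"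
proof -
  obtain a b c d where p: "cyc 1 0 = cyc a b" "x = cyc c d" "(a,b,c,d) \<in> GL2" using assms unfolding distant_def by blast
  obtain e f g h where E: "mat2_mult (a,b,c,d) (e,f,g,h) = mat2_one" "mat2_mult (e,f,g,h) (a,b,c,d) = mat2_one"
    using p(3) unfolding GL2_quad by blast
  have "(a,b) \<in> cyc (1::'a) 0" using p(1) self_cyc by metis
  then have b: "b = 0" unfolding mem_cyc by auto
  have "((1::'a),0) \<in> cyc a b" using p(1) self_cyc by metis
  then obtain s where s: "1 = s*a" unfolding mem_cyc by auto
  from E b have e: "a*f = 0" "c*f+d*h = 1" "h*d = 1"
    by (auto simp: mat2_mult_def mat2_one_def)
  have "f = s*a*f" using s by simp
  also have "\<dots> = 0" using e by (simp add: mult.assoc)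
  finally have "d*h = 1" using e by simp
  then have "d*(h*c) = c" by (simp add: mult.assoc[symmetric])
  then have "x = cyc (h*c) 1" unfolding p(2) using cyc_unit[of h d "h*c" 1] e
    by simp
  then show ?thesis by blast
qed

lemma dist_zero: assumes "distant (cyc 0 1) x" shows "\<exists>t. x = cyc (1::'a::ring_1) t"
proof -
  obtain a b c d where p: "cyc 0 1 = cyc a b" "x = cyc c d" "(a,b,c,d) \<in> GL2" using assms unfolding distant_def by blast
  obtain e f g h where E: "mat2_mult (a,b,c,d) (e,f,g,h) = mat2_one" "mat2_mult (e,f,g,h) (a,b,c,d) = mat2_one"
    using p(3) unfolding GL2_quad by blast
  have "(a,b) \<in> cyc (0::'a) 1" using p(1) self_cyc by metis
  then have a: "a = 0" unfolding mem_cyc by auto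
  have "((0::'a),1) \<in> cyc a b" using p(1) self_cyc by metis
  then obtain s where s: "1 = s*b" unfolding mem_cyc by auto
  from E a have e: "b*h = 0" "c*f+d*h = 1" "f*c = 1"
    by (auto simp: mat2_mult_def mat2_one_def)
  have "h = s*b*h" using s by simp
  also have "\<dots> = 0" using e by (simp add: mult.assoc)
  finally have cf: "c*f = 1" using e by simp
  then have "c*(f*d) = d" by (simp add: mult.assoc[symmetric])
  then have "x = cyc 1 (f*d)" unfolding p(2) using cyc_unit[of f c 1 "f*d"] e
    by simp
  then show ?thesis by blast
qed

lemma GL2_inf: "((1::'a::ring_1),0,t,1) \<in> GL2"
  unfolding GL2_quad by (intro exI[of _ 1] exI[of _ 0] exI[of _ "-t"] exI[of _ 1]) (simp add: mat2_mult_def mat2_one_def)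

lemma dist_inf_set: "{x\<in>projline. distant (cyc 1 0) x} = range (\<lambda>t. cyc t (1::'a::ring_1))"
proof safe
  fix x :: "('a\<times>'a) set" assume "distant (cyc 1 0) x"
  then show "x \<in> range (\<lambda>t. cyc t 1)" using dist_inf by blast
next
  fix t :: 'a
  show "cyc t 1 \<in> projline" unfolding projline_iff using GL2_swap[OF GL2_inf[of t]] by blast
  show "distant (cyc 1 0) (cyc t 1)" unfolding distant_def using GL2_inf[of t] by blast
qed

lemma inj_cyc1: "inj (\<lambda>t. cyc t (1::'a::ring_1))"
proof (rule injI)
  fix t t' :: 'a assume "cyc t 1 = cyc t' 1"
  then have "(t,1) \<in> cyc t' 1" using self_cyc by metis
  then show "t = t'" unfolding mem_cyc by auto
qed

lemma dist_IZ_set: "{x\<in>projline. distant (cyc 1 0) x \<and> distant (cyc 0 1) x} = (\<lambda>t. cyc t (1::'a::ring_1)) ` ring_units"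
proof safe
  fix x :: "('a\<times>'a) set" assume d: "distant (cyc 1 0) x" "distant (cyc 0 1) x"
  obtain t where t: "x = cyc t 1" using dist_inf[OF d(1)] by blast
  obtain t' where t': "x = cyc 1 t'" using dist_zero[OF d(2)] by blast
  have "(1,t') \<in> cyc t 1" using t t' self_cyc by metis
  then obtain r where r: "1 = r*t" "t' = r" unfolding mem_cyc by auto
  have "(t,1) \<in> cyc 1 t'" using t t' self_cyc by metis
  then obtain s where s: "t = s" "1 = s*t'" unfolding mem_cyc by auto
  have "t \<in> ring_units" unfolding ring_units_def using r s by auto
  then show "x \<in> (\<lambda>t. cyc t 1) ` ring_units" using t by blast
next
  fix u :: 'a assume "u \<in> ring_units"
  then obtain v where v: "u*v = 1" "v*u = 1" unfolding ring_units_def by blast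
  show "cyc u 1 \<in> projline" using dist_inf_set by blast
  show "distant (cyc 1 0) (cyc u 1)" using dist_inf_set by blast
  have "(0,1,u,1) \<in> GL2" unfolding GL2_quad
    by (intro exI[of _ "-v"] exI[of _ v] exI[of _ 1] exI[of _ 0]) (simp add: mat2_mult_def mat2_one_def v)
  then show "distant (cyc 0 1) (cyc u 1)" unfolding distant_def by blast
qed

lemma subfield_inv: assumes "is_subfield K" "k \<in> K" "k \<noteq> 0"
  shows "\<exists>y\<in>K. k*y = 1 \<and> y*k = (1::'a::ring_1)"
  using assms unfolding is_subfield_def by metis

lemma GL2_in_sub: "GL2_in K \<subseteq> GL2"
  unfolding GL2_in_def by blast

lemma PK_projline: "projline_sub K \<subseteq> projline"
  unfolding projline_sub_def projline_def using GL2_in_sub by blast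

lemma PK_char: assumes K: "is_subfield K"
  shows "projline_sub K = insert (cyc 1 0) ((\<lambda>k. cyc k (1::'a::ring_1)) ` K)"
proof (intro set_eqI iffI)
  have K0: "0 \<in> K" "1 \<in> K" and Kc: "\<And>x y. x\<in>K \<Longrightarrow> y\<in>K \<Longrightarrow> x - y \<in> K \<and> x*y \<in> K"
    using K unfolding is_subfield_def by auto
  fix x assume "x \<in> projline_sub K"
  then obtain a b c d where x: "x = cyc a b" "(a,b,c,d) \<in> GL2_in K" unfolding projline_sub_def by blast
  then obtain N where N: "mat2_mult (a,b,c,d) N = mat2_one" and abK: "a \<in> K" "b \<in> K"
    unfolding GL2_in_def mat2_entries_def by auto
  obtain e f g h where Nq: "N = (e,f,g,h)" by (cases N)
  have ab: "a*e+b*g = 1" using N unfolding Nq by (simp add: mat2_mult_def mat2_one_def)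
  show "x \<in> insert (cyc 1 0) ((\<lambda>k. cyc k 1) ` K)"
  proof (cases "b = 0")
    case True
    then have "a \<noteq> 0" using ab by auto
    then obtain y where y: "y \<in> K" "a*y = 1" "y*a = 1" using subfield_inv[OF K abK(1)] by blast
    have "cyc (a*1) (a*0) = cyc 1 0" using cyc_unit[of y a 1 0] y by simp
    then show ?thesis using x True by simp
  next
    case False
    then obtain y where y: "y \<in> K" "b*y = 1" "y*b = 1" using subfield_inv[OF K abK(2)] by blast
    have "b*(y*a) = a" using y by (simp add: mult.assoc[symmetric])
    then have "cyc a b = cyc (y*a) 1" using cyc_unit[of y b "y*a" 1] y by simp
    moreover have "y*a \<in> K" using Kc y abK by blast
    ultimately show ?thesis using x by blast
  qed
next
  have K0: "0 \<in> K" "1 \<in> K" and Kc: "\<And>x y. x\<in>K \<Longrightarrow> y\<in>K \<Longrightarrow> x - y \<in> K \<and> x*y \<in> K"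
    using K unfolding is_subfield_def by auto
  fix x assume "x \<in> insert (cyc 1 0) ((\<lambda>k. cyc k 1) ` K)"
  then consider "x = cyc 1 0" | k where "k \<in> K" "x = cyc k 1" by blast
  then show "x \<in> projline_sub K"
  proof cases
    case 1
    have "(1,0,0,1) \<in> GL2_in K" unfolding GL2_in_def mat2_entries_def using K0
      by (intro CollectI conjI exI[of _ "(1,0,0,1)"]) (auto simp: mat2_mult_def mat2_one_def)
    then show ?thesis unfolding projline_sub_def 1 by blast
  next
    case 2
    have "0 - k \<in> K" using Kc K0 2 by blast
    then have "(k,1,1,0) \<in> GL2_in K" unfolding GL2_in_def mat2_entries_def using K0 2
      by (intro CollectI conjI exI[of _ "(0,1,1,-k)"]) (auto simp: mat2_mult_def mat2_one_def)
    then show ?thesis unfolding projline_sub_def 2 by blast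
  qed
qed

lemma PK_card: assumes "is_subfield K" "finite K"
  shows "card (projline_sub K) = card (K::'a::ring_1 set) + 1"
proof -
  have "cyc 1 0 \<notin> (\<lambda>k. cyc k (1::'a)) ` K"
  proof
    assume "cyc 1 0 \<in> (\<lambda>k. cyc k (1::'a)) ` K"
    then obtain k where "cyc 1 0 = cyc k (1::'a)" by blast
    then have "(k,1) \<in> cyc (1::'a) 0" using self_cyc by metis
    then show False unfolding mem_cyc by auto
  qed
  moreover have "card ((\<lambda>k. cyc k (1::'a)) ` K) = card K"
    by (rule card_image[OF inj_on_subset[OF inj_cyc1 subset_UNIV]])
  ultimately show ?thesis unfolding PK_char[OF assms(1)] using assms(2) by simp
qed

lemma PK_dist2: assumes K: "is_subfield K" and kK: "k \<in> K" "k' \<in> K" and kk: "k \<noteq> k'"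
  shows "distant (cyc k 1) (cyc k' (1::'a::ring_1))"
proof -
  have Kc: "\<And>x y. x\<in>K \<Longrightarrow> y\<in>K \<Longrightarrow> x - y \<in> K \<and> x*y = y*x"
    using K unfolding is_subfield_def by auto
  have "k - k' \<in> K" "k - k' \<noteq> 0" using Kc kK kk by auto
  then obtain t where t: "t \<in> K" "(k-k')*t = 1" "t*(k-k') = 1" using subfield_inv[OF K] by blast
  have tk: "t*k = k*t" and tk': "t*k' = k'*t" and kk': "k*k' = k'*k" using Kc t kK by auto
  have h1: "k*t - k'*t = 1" using t by (simp add: algebra_simps)
  have h2: "t*k - t*k' = 1" using t by (simp add: algebra_simps)
  have h3: "k*t*k' = k'*t*k"
  proof -
    have "k*t*k' = k*(k'*t)" by (simp add: mult.assoc tk')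
    also have "\<dots> = (k'*k)*t" by (simp add: mult.assoc[symmetric] kk')
    also have "\<dots> = k'*t*k" by (simp add: mult.assoc tk)
    finally show ?thesis .
  qed
  have "(k,1,k',1) \<in> GL2"
  proof (rule GL2I[of _ "(t, -t, -(k'*t), k*t)"])
    show "mat2_mult (k, 1, k', 1) (t, - t, - (k' * t), k * t) = mat2_one"
      using h1 by (simp add: mat2_mult_def mat2_one_def)
    show "mat2_mult (t, - t, - (k' * t), k * t) (k, 1, k', 1) = mat2_one"
      using h1 h2 h3 by (simp add: mat2_mult_def mat2_one_def mult.assoc)
  qed
  then show ?thesis unfolding distant_def by blast
qed

lemma PK_distant: assumes K: "is_subfield K" and p: "p \<in> projline_sub K" "p' \<in> projline_sub K" "p \<noteq> p'"
  shows "distant p (p'::('a::ring_1\<times>'a) set)"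
proof -
  have A: "distant (cyc 1 0) (cyc k (1::'a))" for k unfolding distant_def using GL2_inf[of k] by blast
  from p(1) consider "p = cyc 1 0" | k where "k \<in> K" "p = cyc k 1" unfolding PK_char[OF K] by blast
  then show ?thesis
  proof cases
    case 1
    from p(2,3) obtain k' where "p' = cyc k' 1" unfolding PK_char[OF K] 1 by blast
    then show ?thesis using A 1 by simp
  next
    case 2
    from p(2) consider "p' = cyc 1 0" | k' where "k' \<in> K" "p' = cyc k' 1" unfolding PK_char[OF K] by blast
    then show ?thesis
    proof cases
      case 1 then show ?thesis using A distant_sym 2 by metis
    next
      case 3: 2
      then show ?thesis using 2 p(3) PK_dist2[OF K] by blast
    qed
  qed
qed

lemma chains_iff: "C \<in> chains K \<longleftrightarrow> (\<exists>g\<in>GL2. C = (\<lambda>p. pt_act p g) ` projline_sub (K::'a::ring_1 set))"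
  unfolding chains_def by blast

lemma chain_projline: "C \<in> chains K \<Longrightarrow> C \<subseteq> (projline::('a::ring_1\<times>'a) set set)"
  unfolding chains_iff using PK_projline pt_act_projline by blast

lemma chain_distant: assumes K: "is_subfield K" and C: "C \<in> chains K" and p: "p \<in> C" "p' \<in> C" "p \<noteq> p'"
  shows "distant p (p'::('a::ring_1\<times>'a) set)"
proof -
  obtain g where g: "g \<in> GL2" "C = (\<lambda>p. pt_act p g) ` projline_sub K" using C unfolding chains_iff by blast
  obtain p0 p0' where "p0 \<in> projline_sub K" "p0' \<in> projline_sub K" "p = pt_act p0 g" "p' = pt_act p0' g"
    using p g by blast
  then show ?thesis using p(3) PK_distant[OF K] distant_act g(1) by metis
qed

lemma inj_act: assumes "(M::'a::ring_1 mat2) \<in> GL2" shows "inj (\<lambda>p. pt_act p M)"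
proof -
  obtain N where "\<forall>p. pt_act (pt_act p M) N = p" using pt_act_inv[OF assms] by blast
  then show ?thesis by (metis injI)
qed

lemma chain_card: assumes K: "is_subfield K" "finite K" and C: "C \<in> chains K"
  shows "card C = card (K::'a::ring_1 set) + 1"
proof -
  obtain g where g: "g \<in> GL2" "C = (\<lambda>p. pt_act p g) ` projline_sub K" using C unfolding chains_iff by blast
  have "card C = card (projline_sub K)" unfolding g(2)
    by (rule card_image[OF inj_on_subset[OF inj_act[OF g(1)] subset_UNIV]])
  then show ?thesis using PK_card[OF K] by simp
qed

lemma chain_act: assumes "C \<in> chains K" "(M::'a::ring_1 mat2) \<in> GL2"
  shows "(\<lambda>p. pt_act p M) ` C \<in> chains K"
proof -
  obtain g where g: "g \<in> GL2" "C = (\<lambda>p. pt_act p g) ` projline_sub K" using assms(1) unfolding chains_iff by blast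
  have "(\<lambda>p. pt_act p M) ` C = (\<lambda>p. pt_act p (mat2_mult g M)) ` projline_sub K"
    unfolding g(2) image_image pt_act_comp ..
  then show ?thesis unfolding chains_iff using GL2_mult[OF g(1) assms(2)] by blast
qed

lemma ct_le: fixes K :: "'a::{ring_1,finite} set"
  assumes M: "M \<in> GL2"
  shows "chains_through K S \<le> chains_through K ((\<lambda>p. pt_act p M) ` S)"
proof -
  obtain N where N: "\<forall>p. pt_act (pt_act p M) N = p" using pt_act_inv[OF M] by blast
  have inj: "inj_on (\<lambda>C. (\<lambda>p. pt_act p M) ` C) X" for X :: "('a\<times>'a) set set set"
  proof (rule inj_onI)
    fix C C' assume "(\<lambda>p. pt_act p M) ` C = (\<lambda>p. pt_act p M) ` C'"
    then have "(\<lambda>p. pt_act p N) ` ((\<lambda>p. pt_act p M) ` C) = (\<lambda>p. pt_act p N) ` ((\<lambda>p. pt_act p M) ` C')" by simp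
    then show "C = C'" by (simp add: image_image N)
  qed
  show ?thesis unfolding chains_through_def
    by (rule card_inj_on_le[OF inj]) (auto intro: chain_act[OF _ M])
qed

lemma ct_inv: fixes K :: "'a::{ring_1,finite} set"
  assumes M: "M \<in> GL2"
  shows "chains_through K ((\<lambda>p. pt_act p M) ` S) = chains_through K S"
proof -
  obtain N where N: "N \<in> GL2" "\<forall>p. pt_act (pt_act p M) N = p" using pt_act_inv[OF M] by blast
  have "chains_through K ((\<lambda>p. pt_act p M) ` S) \<le> chains_through K ((\<lambda>p. pt_act p N) ` ((\<lambda>p. pt_act p M) ` S))"
    by (rule ct_le[OF N(1)])
  also have "(\<lambda>p. pt_act p N) ` ((\<lambda>p. pt_act p M) ` S) = S" by (simp add: image_image N(2))
  finally show ?thesis using ct_le[OF M, of K S] by simp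
qed

lemma triple_trans: assumes d: "distant x1 x2" "distant x1 x3" "distant x2 x3"
  shows "\<exists>M\<in>GL2. x1 = pt_act (cyc 1 0) M \<and> x2 = pt_act (cyc 0 1) M \<and> x3 = pt_act (cyc 1 1) (M::'a::ring_1 mat2)"
proof -
  obtain a b c d where x: "x1 = cyc a b" "x2 = cyc c d" and M0: "(a,b,c,d) \<in> GL2" using d(1) unfolding distant_def by blast
  define M0' where "M0' = (a,b,c,d)"
  obtain N0 where N0: "N0 \<in> GL2" "\<forall>p. pt_act (pt_act p M0') N0 = p" "\<forall>p. pt_act (pt_act p N0) M0' = p"
    using pt_act_inv M0 unfolding M0'_def by blast
  have x1: "x1 = pt_act (cyc 1 0) M0'" and x2: "x2 = pt_act (cyc 0 1) M0'" unfolding M0'_def x pt_act_cyc by simp_all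
  define y where "y = pt_act x3 N0"
  have "distant (pt_act x1 N0) y" "distant (pt_act x2 N0) y" using distant_act[OF d(2) N0(1)] distant_act[OF d(3) N0(1)]
    unfolding y_def by auto
  moreover have "pt_act x1 N0 = cyc 1 0" "pt_act x2 N0 = cyc 0 1" using x1 x2 N0(2) by simp_all
  ultimately have dy: "distant (cyc 1 0) y" "distant (cyc 0 1) y" by simp_all
  have "y \<in> projline" using distant_projline[OF distant_sym[OF dy(1)]] .
  then have "y \<in> (\<lambda>t. cyc t (1::'a)) ` ring_units" using dist_IZ_set dy by blast
  then obtain u v where y: "y = cyc u 1" and uv: "u*v = 1" "v*u = 1" unfolding ring_units_def by blast
  have D: "(u,0,0,1) \<in> GL2" by (rule GL2I[of _ "(v,0,0,1)"]) (simp_all add: mat2_mult_def mat2_one_def uv)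
  define M where "M = mat2_mult (u,0,0,1) M0'"
  have MG: "M \<in> GL2" unfolding M_def using GL2_mult[OF D] M0 M0'_def by blast
  have e1: "pt_act (cyc 1 0) (u,0,0,1) = cyc 1 0"
    using cyc_unit[of v u 1 0] uv by (simp add: pt_act_cyc)
  have e2: "pt_act (cyc 0 1) (u,0,0,1) = cyc 0 (1::'a)" by (simp add: pt_act_cyc)
  have e3: "pt_act (cyc 1 1) (u,0,0,1) = y" unfolding y by (simp add: pt_act_cyc)
  have e4: "pt_act y M0' = x3" unfolding y_def using N0(3) by simp
  have "x1 = pt_act (cyc 1 0) M" unfolding M_def pt_act_comp[symmetric] e1 x1 ..
  moreover have "x2 = pt_act (cyc 0 1) M" unfolding M_def pt_act_comp[symmetric] e2 x2 ..
  moreover have "x3 = pt_act (cyc 1 1) M" unfolding M_def pt_act_comp[symmetric] e3 e4 ..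
  ultimately show ?thesis using MG by blast
qed



lemma ct1: fixes K :: "'a::{ring_1,finite} set"
  assumes "p \<in> projline" shows "chains_through K {p} = chains_through K {cyc 1 0}"
proof -
  obtain a b c d where p: "p = cyc a b" "(a,b,c,d) \<in> GL2" using assms unfolding projline_iff by blast
  have "{p} = (\<lambda>q. pt_act q (a,b,c,d)) ` {cyc 1 0}" by (simp add: pt_act_cyc p)
  then show ?thesis by (simp only:) (rule ct_inv[OF p(2)])
qed

lemma ct2: fixes K :: "'a::{ring_1,finite} set"
  assumes "distant p1 p2" shows "chains_through K {p1,p2} = chains_through K {cyc 1 0, cyc 0 1}"
proof -
  obtain a b c d where p: "p1 = cyc a b" "p2 = cyc c d" "(a,b,c,d) \<in> GL2" using assms unfolding distant_def by blast
  have "{p1,p2} = (\<lambda>q. pt_act q (a,b,c,d)) ` {cyc 1 0, cyc 0 1}" by (simp add: pt_act_cyc p)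
  then show ?thesis by (simp only:) (rule ct_inv[OF p(3)])
qed

lemma ct3: fixes K :: "'a::{ring_1,finite} set"
  assumes "distant x1 x2" "distant x1 x3" "distant x2 x3"
  shows "chains_through K {x1,x2,x3} = chains_through K {cyc 1 0, cyc 0 1, cyc 1 1}"
proof -
  obtain M where M: "M \<in> GL2" "x1 = pt_act (cyc 1 0) M" "x2 = pt_act (cyc 0 1) M" "x3 = pt_act (cyc 1 1) M"
    using triple_trans[OF assms] by blast
  have "{x1,x2,x3} = (\<lambda>q. pt_act q M) ` {cyc 1 0, cyc 0 1, cyc 1 1}" using M by simp
  then show ?thesis by (simp only:) (rule ct_inv[OF M(1)])
qed

lemma dIZ: "distant (cyc 1 0) (cyc 0 (1::'a::ring_1))"
  unfolding distant_def using GL2_inf[of 0] by blast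

lemma eq2: fixes K :: "'a::{ring_1,finite} set"
  assumes K: "is_subfield K"
  shows "card (ring_units::'a set) * chains_through K {cyc 1 0, cyc 0 1, cyc 1 1}
         = (card K - 1) * chains_through K {cyc 1 0, cyc 0 1}"
proof -
  let ?i = "cyc (1::'a) 0" and ?z = "cyc (0::'a) 1"
  define X where "X = {x\<in>projline. distant ?i x \<and> distant ?z x}"
  define A where "A = {C\<in>chains K. {?i,?z} \<subseteq> C}"
  have iz: "?i \<noteq> ?z" using dIZ distant_irrefl by metis
  have "(\<Sum>x\<in>X. card {C\<in>A. x\<in>C}) = (card K - 1) * card A"
  proof (rule sum_multicount)
    show "finite X" "finite A" by simp_all
    show "\<forall>C\<in>A. card {x\<in>X. x\<in>C} = card K - 1"
    proof
      fix C assume C: "C \<in> A"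
      have "{x\<in>X. x\<in>C} = C - {?i,?z}"
      proof (intro set_eqI iffI)
        fix x assume "x \<in> {x\<in>X. x\<in>C}"
        then show "x \<in> C - {?i,?z}" unfolding X_def using distant_irrefl by auto
      next
        fix x assume x: "x \<in> C - {?i,?z}"
        have "x \<in> projline" using x C chain_projline unfolding A_def by blast
        moreover have "distant ?i x" "distant ?z x" using x C chain_distant[OF K] unfolding A_def by auto
        ultimately show "x \<in> {x\<in>X. x\<in>C}" using x unfolding X_def by blast
      qed
      moreover have "card C = card K + 1" using C chain_card[OF K] unfolding A_def by simp
      ultimately show "card {x\<in>X. x\<in>C} = card K - 1" using C iz unfolding A_def
        by (simp add: card_Diff_subset)
    qed
  qed
  moreover have "(\<Sum>x\<in>X. card {C\<in>A. x\<in>C}) = (\<Sum>x\<in>X. chains_through K {?i,?z,cyc 1 1})"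
  proof (rule sum.cong[OF refl])
    fix x assume x: "x \<in> X"
    have "{C\<in>A. x\<in>C} = {C\<in>chains K. {?i,?z,x} \<subseteq> C}" unfolding A_def by auto
    then have "card {C\<in>A. x\<in>C} = chains_through K {?i,?z,x}" unfolding chains_through_def by simp
    also have "\<dots> = chains_through K {?i,?z,cyc 1 1}"
      using ct3[OF dIZ] x unfolding X_def by blast
    finally show "card {C\<in>A. x\<in>C} = chains_through K {?i,?z,cyc 1 1}" .
  qed
  moreover have "card X = card (ring_units::'a set)"
    unfolding X_def dist_IZ_set by (rule card_image[OF inj_on_subset[OF inj_cyc1 subset_UNIV]])
  moreover have "card A = chains_through K {?i,?z}" unfolding A_def chains_through_def ..
  ultimately show ?thesis by (simp add: mult.commute)
qed

lemma eq1: fixes K :: "'a::{ring_1,finite} set"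
  assumes K: "is_subfield K"
  shows "card (UNIV::'a set) * chains_through K {cyc 1 0, cyc 0 1}
         = card K * chains_through K {cyc 1 0}"
proof -
  let ?i = "cyc (1::'a) 0" and ?z = "cyc (0::'a) 1"
  define X where "X = {x\<in>projline. distant ?i x}"
  define A where "A = {C\<in>chains K. {?i} \<subseteq> C}"
  have "(\<Sum>x\<in>X. card {C\<in>A. x\<in>C}) = card K * card A"
  proof (rule sum_multicount)
    show "finite X" "finite A" by simp_all
    show "\<forall>C\<in>A. card {x\<in>X. x\<in>C} = card K"
    proof
      fix C assume C: "C \<in> A"
      have "{x\<in>X. x\<in>C} = C - {?i}"
      proof (intro set_eqI iffI)
        fix x assume "x \<in> {x\<in>X. x\<in>C}"
        then show "x \<in> C - {?i}" unfolding X_def using distant_irrefl by auto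
      next
        fix x assume x: "x \<in> C - {?i}"
        have "x \<in> projline" using x C chain_projline unfolding A_def by blast
        moreover have "distant ?i x" using x C chain_distant[OF K] unfolding A_def by auto
        ultimately show "x \<in> {x\<in>X. x\<in>C}" using x unfolding X_def by blast
      qed
      moreover have "card C = card K + 1" using C chain_card[OF K] unfolding A_def by simp
      ultimately show "card {x\<in>X. x\<in>C} = card K" using C unfolding A_def
        by (simp add: card_Diff_subset)
    qed
  qed
  moreover have "(\<Sum>x\<in>X. card {C\<in>A. x\<in>C}) = (\<Sum>x\<in>X. chains_through K {?i,?z})"
  proof (rule sum.cong[OF refl])
    fix x assume x: "x \<in> X"
    have "{C\<in>A. x\<in>C} = {C\<in>chains K. {?i,x} \<subseteq> C}" unfolding A_def by auto
    then have "card {C\<in>A. x\<in>C} = chains_through K {?i,x}" unfolding chains_through_def by simp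
    also have "\<dots> = chains_through K {?i,?z}"
      using ct2 x unfolding X_def by blast
    finally show "card {C\<in>A. x\<in>C} = chains_through K {?i,?z}" .
  qed
  moreover have "card X = card (UNIV::'a set)"
    unfolding X_def dist_inf_set by (rule card_image[OF inj_cyc1])
  moreover have "card A = chains_through K {?i}" unfolding A_def chains_through_def ..
  ultimately show ?thesis by (simp add: mult.commute)
qed

lemma eq0: fixes K :: "'a::{ring_1,finite} set"
  assumes K: "is_subfield K"
  shows "card (projline::('a\<times>'a) set set) * chains_through K {cyc 1 0}
         = (card K + 1) * card (chains K)"
proof -
  let ?i = "cyc (1::'a) 0"
  define X where "X = (projline::('a\<times>'a) set set)"
  define A where "A = chains K"
  have "(\<Sum>x\<in>X. card {C\<in>A. x\<in>C}) = (card K + 1) * card A"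
  proof (rule sum_multicount)
    show "finite X" "finite A" by simp_all
    show "\<forall>C\<in>A. card {x\<in>X. x\<in>C} = card K + 1"
    proof
      fix C assume C: "C \<in> A"
      have "{x\<in>X. x\<in>C} = C" using C chain_projline unfolding X_def A_def by blast
      then show "card {x\<in>X. x\<in>C} = card K + 1" using C chain_card[OF K] unfolding A_def by simp
    qed
  qed
  moreover have "(\<Sum>x\<in>X. card {C\<in>A. x\<in>C}) = (\<Sum>x\<in>X. chains_through K {?i})"
  proof (rule sum.cong[OF refl])
    fix x assume x: "x \<in> X"
    have "{C\<in>A. x\<in>C} = {C\<in>chains K. {x} \<subseteq> C}" unfolding A_def by auto
    then have "card {C\<in>A. x\<in>C} = chains_through K {x}" unfolding chains_through_def by simp
    also have "\<dots> = chains_through K {?i}" using ct1 x unfolding X_def by blast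
    finally show "card {C\<in>A. x\<in>C} = chains_through K {?i}" .
  qed
  ultimately show ?thesis unfolding X_def A_def by (simp add: mult.commute)
qed



theorem mainTheorem1:
  fixes K :: "'a::{ring_1, finite} set" and q d :: nat
    and p p1 p2 x1 x2 x3 :: "('a \<times> 'a) set"
  assumes "is_subfield K"
    and "card K = q"
    and "card (UNIV :: 'a set) = q ^ d"
    and "p \<in> projline"
    and "p1 \<in> projline" "p2 \<in> projline" "distant p1 p2"
    and "x1 \<in> projline" "x2 \<in> projline" "x3 \<in> projline"
    and "distant x1 x2" "distant x1 x3" "distant x2 x3"
  shows "real (card (chains K)) =
           real (card (projline :: ('a \<times> 'a) set set)) * real q ^ (d - 1)
             * real (card (ring_units :: 'a set)) / (real q ^ 2 - 1)
             * real (chains_through K {x1, x2, x3}) \<and>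
         real (chains_through K {p}) =
           real q ^ (d - 1) * real (card (ring_units :: 'a set)) / (real q - 1)
             * real (chains_through K {x1, x2, x3}) \<and>
         real (chains_through K {p1, p2}) =
           real (card (ring_units :: 'a set)) / (real q - 1)
             * real (chains_through K {x1, x2, x3})"
proof -
  define l3 where "l3 = chains_through K {cyc (1::'a) 0, cyc 0 1, cyc 1 1}"
  define l2 where "l2 = chains_through K {cyc (1::'a) 0, cyc 0 1}"
  define l1 where "l1 = chains_through K {cyc (1::'a) 0}"
  define r where "r = card (ring_units::'a set)"
  define v where "v = card (projline::('a\<times>'a) set set)"
  define c where "c = card (chains K)"
  have E2: "r * l3 = (q - 1) * l2" using eq2[OF assms(1)] assms(2) unfolding r_def l3_def l2_def by simp
  have E1: "q^d * l2 = q * l1" using eq1[OF assms(1)] assms(2,3) unfolding l1_def l2_def by simp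
  have E0: "v * l1 = (q+1) * c" using eq0[OF assms(1)] assms(2) unfolding v_def l1_def c_def by simp
  have K01: "{0,1} \<subseteq> K" using assms(1) unfolding is_subfield_def by auto
  have c01: "card {0::'a,1} = 2" by simp
  have q2: "q \<ge> 2" using card_mono[OF _ K01] c01 assms(2) by simp
  have "card (UNIV::'a set) \<ge> 2" using card_mono[OF _ subset_UNIV[of "{0::'a,1}"]] c01 by simp
  then have "d \<noteq> 0" using assms(3) by (cases d) auto
  then obtain d' where d': "d = Suc d'" by (cases d) auto
  have P1: "chains_through K {p} = l1" unfolding l1_def by (rule ct1[OF assms(4)])
  have P2: "chains_through K {p1,p2} = l2" unfolding l2_def by (rule ct2[OF assms(7)])
  have P3: "chains_through K {x1,x2,x3} = l3" unfolding l3_def by (rule ct3[OF assms(11-13)])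
  define Q where "Q = real q"
  have Q2: "Q \<ge> 2" unfolding Q_def using q2 by simp
  have "real (r * l3) = real ((q - 1) * l2)" using E2 by simp
  then have R2: "real r * real l3 = (Q - 1) * real l2" unfolding Q_def using q2 by (simp add: of_nat_diff)
  have "real (q^d * l2) = real (q * l1)" using E1 by simp
  then have "Q * (Q ^ d' * real l2) = Q * real l1" unfolding Q_def d' by (simp add: mult.assoc)
  then have R1: "real l1 = Q ^ (d - 1) * real l2" using Q2 d' by simp
  have "real (v * l1) = real ((q+1) * c)" using E0 by simp
  then have R0: "real v * real l1 = (Q + 1) * real c" unfolding Q_def by (simp add: algebra_simps)
  have L2: "real l2 = real r / (Q - 1) * real l3" using R2 Q2 by (simp add: field_simps)
  have L1: "real l1 = Q ^ (d - 1) * real r / (Q - 1) * real l3" using R1 L2 by simp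
  have L0: "real c = real v * real l1 / (Q + 1)" using R0 Q2 by (simp add: field_simps)
  have sq: "Q ^ 2 - 1 = (Q + 1) * (Q - 1)" by (simp add: power2_eq_square algebra_simps)
  have G1: "real c = real v * Q ^ (d - 1) * real r / (Q ^ 2 - 1) * real l3"
    unfolding L0 L1 sq using Q2 by (simp add: field_simps)
  show ?thesis using G1 L1 L2 unfolding P1 P2 P3 Q_def c_def v_def r_def by simp
qed

end
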